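(* For every $n>0$, there are finite alphabets $\Sigma_I,\Sigma_O$ and a language $L_n'\subseteq(\Sigma_I\times\Sigma_O)^\omega$ recognized by a finitary Büchi automaton with costs $\mathcal{A}_n'$ with $O(n)$ states such that: Player $O$ wins $\Gamma_f(L_n')$ for every delay function $f$; an optimal winning strategy for Player $O$ in $\Gamma_{f_{2^n}}(L_n')$ has cost $0$; and for every $k<2^n$, an optimal winning strategy for Player $O$ in $\Gamma_{f_k}(L_n')$ has cost $n$.
   Context: A parity automaton with costs is a tuple $\mathcal{A}=(Q,\Sigma,q_I,\delta,\Omega,\mathrm{Cst})$ with a finite set $Q$ of states, a finite alphabet $\Sigma$, an initial state $q_I$, a deterministic complete transition function $\delta\colon Q\times\Sigma\to Q$, a coloring $\Omega\colon Q\to\mathbb{N}$, and a cost function $\mathrm{Cst}$ assigning to every transition $(q,a,\delta(q,a))$ either $\epsilon$ or $\mathtt{i}$ (increment-transition). A finitary Büchi automaton is one in which every transition is an increment-transition and $\Omega(Q)=\{1,2\}$. The run on $a_0a_1\cdots$ is $(q_0,a_0,q_1)(q_1,a_1,q_2)\cdots$ with $q_0=q_I$, $q_{j+1}=\delta(q_j,a_j)$; the cost of a finite run is its number of increment-transitions. For odd $c$, $\mathrm{Ans}(c)=\{c'\in\Omega(Q)\mid c'>c,\ c'\text{ even}\}$. For an infinite run $\rho$ and $n$, $\mathrm{Cor}(\rho,n)=0$ if $\Omega(q_n)$ is even, and otherwise it is the minimal cost of $(q_n,a_n,q_{n+1})\cdots(q_{n'-1},a_{n'-1},q_{n'})$ over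 $n'>n$ with $\Omega(q_{n'})\in\mathrm{Ans}(\Omega(q_n))$ ($\min\emptyset=\infty$). The run is accepting if $\limsup_n\mathrm{Cor}(\rho,n)<\infty$; $L(\mathcal{A})$ is the set of infinite words whose run is accepting. A delay function is a map $f\colon\mathbb{N}\to\mathbb{N}\setminus\{0\}$; for $k\ge0$, $f_k$ denotes the delay function with $f_k(0)=k+1$ and $f_k(i)=1$ for $i>0$. For $L\subseteq(\Sigma_I\times\Sigma_O)^\omega$, the delay game $\Gamma_f(L)$ is played in rounds $i=0,1,2,\ldots$: in round $i$, Player $I$ picks $u_i\in\Sigma_I^{f(i)}$, then Player $O$ picks $v_i\in\Sigma_O$. Player $O$ wins the play if the outcome, i.e., the word over $\Sigma_I\times\Sigma_O$ pairing $u_0u_1u_2\cdots$ and $v_0v_1v_2\cdots$ letterwise, is in $L$. A strategy for Player $O$ is a map $\tau_O\colon\Sigma_I^*\to\Sigma_O$; a play is consistent with $\tau_O$ if $v_i=\tau_O(u_0\cdots u_i)$ for all $i$; $\tau_O$ is winning if every consistent play is won by Player $O$, and Player $O$ wins the game if she has a winning strategy. For a winning strategy $\tau_O$ in $\Gamma_f(L(\mathcal{A}))$, its cost is $\mathrm{Cst}_\mathcal{A}(\tau_O)=\sup_w\limsup_{n\to\infty}\mathrm{Cor}(\rho(w),n)$, where $w$ ranges over outcomes of plays consistent with $\tau_O$ and $\rho(w)$ is the run of $\mathcal{A}$ on $w$; a winning strategy is optimal if its cost is minimal among all winning strategies of Player $O$ in $\Gamma_f(L(\mathcal{A}))$. 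*)

theory Defs
  imports Main "HOL-Library.Extended_Nat" "HOL-Library.Liminf_Limsup"
begin

text \<open>The automaton is deterministic and
complete on its state set and alphabet; incr q a holds iff the transition
(q, a, trans q a) is an increment-transition (cost i), otherwise it has cost epsilon.\<close>

record ('q, 'a) pac =
  states :: "'q set"
  alph   :: "'a set"
  init   :: 'q
  trans  :: "'q \<Rightarrow> 'a \<Rightarrow> 'q"
  col    :: "'q \<Rightarrow> nat"
  incr   :: "'q \<Rightarrow> 'a \<Rightarrow> bool"

definition wf_pac :: "('q, 'a) pac \<Rightarrow> bool" where
  "wf_pac A \<longleftrightarrow> finite (states A) \<and> finite (alph A) \<and> init A \<in> states A \<and>
     (\<forall>q\<in>states A. \<forall>a\<in>alph A. trans A q a \<in> states A)"

definition finitary_buechi :: "('q, 'a) pac \<Rightarrow> bool" where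
  "finitary_buechi A \<longleftrightarrow> wf_pac A \<and>
     (\<forall>q\<in>states A. \<forall>a\<in>alph A. incr A q a) \<and> col A ` states A = {1, 2}"

primrec run :: "('q, 'a) pac \<Rightarrow> (nat \<Rightarrow> 'a) \<Rightarrow> nat \<Rightarrow> 'q" where
  "run A w 0 = init A"
| "run A w (Suc j) = trans A (run A w j) (w j)"

definition seg_cost :: "('q, 'a) pac \<Rightarrow> (nat \<Rightarrow> 'a) \<Rightarrow> nat \<Rightarrow> nat \<Rightarrow> nat" where
  "seg_cost A w n n' = card {j. n \<le> j \<and> j < n' \<and> incr A (run A w j) (w j)}"

definition Ans :: "('q, 'a) pac \<Rightarrow> nat \<Rightarrow> nat set" where
  "Ans A c = {c' \<in> col A ` states A. c' > c \<and> even c'}"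

text \<open>Cor(rho, n); the infimum of the empty set of enat is infinity.\<close>
definition Cor :: "('q, 'a) pac \<Rightarrow> (nat \<Rightarrow> 'a) \<Rightarrow> nat \<Rightarrow> enat" where
  "Cor A w n =
     (if even (col A (run A w n)) then 0
      else (INF n' \<in> {n'. n' > n \<and> col A (run A w n') \<in> Ans A (col A (run A w n))}.
              enat (seg_cost A w n n')))"

definition lang :: "('q, 'a) pac \<Rightarrow> (nat \<Rightarrow> 'a) set" where
  "lang A = {w. (\<forall>i. w i \<in> alph A) \<and> limsup (Cor A w) < \<infinity>}"

definition delay_fun :: "(nat \<Rightarrow> nat) \<Rightarrow> bool" where
  "delay_fun f \<longleftrightarrow> (\<forall>i. f i > 0)"

definition f_k :: "nat \<Rightarrow> nat \<Rightarrow> nat" where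
  "f_k k i = (if i = 0 then k + 1 else 1)"

text \<open>Number of input letters chosen by Player I up to and including round i.\<close>
definition pref_len :: "(nat \<Rightarrow> nat) \<Rightarrow> nat \<Rightarrow> nat" where
  "pref_len f i = (\<Sum>j\<le>i. f j)"

text \<open>Outcome of the play in which Player I's letters form the input word x and
Player O plays according to tau: v_i = tau(u_0 ... u_i).\<close>
definition outcome :: "(nat \<Rightarrow> nat) \<Rightarrow> ('i list \<Rightarrow> 'o) \<Rightarrow> (nat \<Rightarrow> 'i) \<Rightarrow> nat \<Rightarrow> 'i \<times> 'o" where
  "outcome f \<tau> x j = (x j, \<tau> (map x [0..<pref_len f j]))"

definition strategy :: "'i set \<Rightarrow> 'o set \<Rightarrow> ('i list \<Rightarrow> 'o) \<Rightarrow> bool" where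
  "strategy SI SO \<tau> \<longleftrightarrow> (\<forall>u \<in> lists SI. \<tau> u \<in> SO)"

definition winning :: "'i set \<Rightarrow> 'o set \<Rightarrow> (nat \<Rightarrow> nat) \<Rightarrow> (nat \<Rightarrow> 'i \<times> 'o) set
                         \<Rightarrow> ('i list \<Rightarrow> 'o) \<Rightarrow> bool" where
  "winning SI SO f L \<tau> \<longleftrightarrow> strategy SI SO \<tau> \<and>
     (\<forall>x. (\<forall>i. x i \<in> SI) \<longrightarrow> outcome f \<tau> x \<in> L)"

definition O_wins :: "'i set \<Rightarrow> 'o set \<Rightarrow> (nat \<Rightarrow> nat) \<Rightarrow> (nat \<Rightarrow> 'i \<times> 'o) set \<Rightarrow> bool" where
  "O_wins SI SO f L \<longleftrightarrow> (\<exists>\<tau>. winning SI SO f L \<tau>)"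

definition strat_cost :: "('q, 'i \<times> 'o) pac \<Rightarrow> 'i set \<Rightarrow> (nat \<Rightarrow> nat) \<Rightarrow> ('i list \<Rightarrow> 'o) \<Rightarrow> enat" where
  "strat_cost A SI f \<tau> = (SUP x \<in> {x. \<forall>i. x i \<in> SI}. limsup (Cor A (outcome f \<tau> x)))"

definition optimal :: "('q, 'i \<times> 'o) pac \<Rightarrow> 'i set \<Rightarrow> 'o set \<Rightarrow> (nat \<Rightarrow> nat)
                        \<Rightarrow> ('i list \<Rightarrow> 'o) \<Rightarrow> bool" where
  "optimal A SI SO f \<tau> \<longleftrightarrow> winning SI SO f (lang A) \<tau> \<and>
     (\<forall>\<tau>'. winning SI SO f (lang A) \<tau>' \<longrightarrow> strat_cost A SI f \<tau> \<le> strat_cost A SI f \<tau>')"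

end

theory Submission
  imports Defs
begin

definition bitn :: "nat \<Rightarrow> nat \<Rightarrow> nat" where "bitn i c = c div 2^i mod 2"
definition rs :: "nat \<Rightarrow> nat \<Rightarrow> nat \<Rightarrow> nat \<Rightarrow> nat" where
  "rs N p i e = N + 2 + 4*i + 2*p + e"
definition strt :: "nat \<Rightarrow> nat \<Rightarrow> nat \<Rightarrow> nat" where
  "strt N a ob = (if a div 2 = 0 then (if a mod 2 = ob mod 2 then 0 else 2)
      else rs N (ob mod 2) (ob div 2) (bitn (ob div 2) (a div 2 - 1)))"
definition tr :: "nat \<Rightarrow> nat \<Rightarrow> nat \<times> nat \<Rightarrow> nat" where
  "tr N q ao = (if q = 0 then strt N (fst ao) (snd ao)
     else if q = 1 then 1
     else if q \<le> N+1 then (if q = N+1 then 0 else q+1)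
     else (let r = q - (N+2); a = fst ao; ob = snd ao in
       if bitn (r div 4) (a div 2) \<noteq> r mod 2 then 1
       else if a div 2 = 0 then (if a mod 2 = (r div 2) mod 2 then 0 else 2)
       else rs N ((r div 2) mod 2) (ob div 2) (bitn (ob div 2) (a div 2 - 1))))"
definition colr :: "nat \<Rightarrow> nat \<Rightarrow> nat" where
  "colr N q = (if 2 \<le> q \<and> q \<le> N+1 then 1 else 2)"
definition Aut :: "nat \<Rightarrow> (nat, nat \<times> nat) pac" where
  "Aut N = \<lparr>states = {0..5*N+5}, alph = {..<2*2^N+2} \<times> {..<2*N+2}, init = 0,
     trans = tr N, col = colr N, incr = (\<lambda>q a. True)\<rparr>"

lemma Aut_simps[simp]: "states (Aut N) = {0..5*N+5}" "alph (Aut N) = {..<2*2^N+2} \<times> {..<2*N+2}"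
  "init (Aut N) = 0" "trans (Aut N) = tr N" "col (Aut N) = colr N" "incr (Aut N) = (\<lambda>q a. True)"
  by (simp_all add: Aut_def)

lemma run0[simp]: "run (Aut N) w 0 = 0" by simp
lemma runS: "run (Aut N) w (Suc j) = tr N (run (Aut N) w j) (w j)" by simp

lemma bitn_le: "bitn i c \<le> 1" unfolding bitn_def by simp

lemma rs_dec:
  assumes "p \<le> 1" "e \<le> 1"
  shows "(rs N p i e - (N+2)) div 4 = i" "(rs N p i e - (N+2)) mod 2 = e"
    "((rs N p i e - (N+2)) div 2) mod 2 = p" "rs N p i e > N+1"
proof -
  have h: "rs N p i e - (N+2) = 4*i+2*p+e" unfolding rs_def by simp
  have "p = 0 \<or> p = 1" "e = 0 \<or> e = 1" using assms by auto
  then show "(rs N p i e - (N+2)) div 4 = i" "(rs N p i e - (N+2)) mod 2 = e"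
    "((rs N p i e - (N+2)) div 2) mod 2 = p" "rs N p i e > N+1" unfolding h
    by (auto simp: rs_def) presburger+
qed

lemma tr_mid: "2 \<le> q \<Longrightarrow> q \<le> N \<Longrightarrow> tr N q a = q+1"
  unfolding tr_def by auto
lemma tr_last: "0 < N \<Longrightarrow> tr N (N+1) a = 0"
  unfolding tr_def by auto

lemma tr_rs:
  assumes "p \<le> 1" "e \<le> 1"
  shows "tr N (rs N p i e) (a, ob) = (if bitn i (a div 2) \<noteq> e then 1
       else if a div 2 = 0 then (if a mod 2 = p then 0 else 2)
       else rs N p (ob div 2) (bitn (ob div 2) (a div 2 - 1)))"
proof -
  have h: "rs N p i e \<noteq> 0" "rs N p i e \<noteq> 1" "\<not> rs N p i e \<le> N+1" using rs_dec(4)[OF assms, of N i] by auto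
  show ?thesis unfolding tr_def fst_conv snd_conv if_not_P[OF h(1)] if_not_P[OF h(2)] if_not_P[OF h(3)] Let_def
    rs_dec(1-3)[OF assms] by (rule refl)
qed

lemma seg_cost_Aut: "seg_cost (Aut N) w m n' = n' - m"
proof -
  have "{j. m \<le> j \<and> j < n' \<and> incr (Aut N) (run (Aut N) w j) (w j)} = {m..<n'}" by auto
  then show ?thesis unfolding seg_cost_def by simp
qed

lemma Ans_Aut: "0 < N \<Longrightarrow> Ans (Aut N) 1 = {2}"
proof -
  assume "0 < N"
  have "colr N ` {0..5*N+5} = {1,2}"
  proof
    show "colr N ` {0..5*N+5} \<subseteq> {1,2}" by (auto simp: colr_def)
    have "colr N 0 = 2" "colr N 2 = 1" using \<open>0<N\<close> by (auto simp: colr_def)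
    moreover have "(0::nat) \<in> {0..5*N+5}" "(2::nat) \<in> {0..5*N+5}" by auto
    ultimately show "{1,2} \<subseteq> colr N ` {0..5*N+5}" unfolding insert_subset
      using image_eqI[of 1 "colr N" 2 "{0..5*N+5}"] image_eqI[of 2 "colr N" 0 "{0..5*N+5}"] by simp
  qed
  then show ?thesis unfolding Ans_def by auto
qed

lemma Ans_Aut': "0 < N \<Longrightarrow> Ans (Aut N) (Suc 0) = {2}"
  using Ans_Aut by simp

lemma chain:
  assumes "run (Aut N) w m = q" "2 \<le> q" "q \<le> N+1"
  shows "j \<le> N+1-q \<Longrightarrow> run (Aut N) w (m+j) = q+j"
proof (induction j)
  case 0 then show ?case using assms by simp
next
  case (Suc j)
  then have "run (Aut N) w (m+j) = q+j" by simp
  moreover have "2 \<le> q+j" "q+j \<le> N" using Suc.prems assms by auto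
  ultimately show ?case using tr_mid[of "q+j" N "w (m+j)"] by simp
qed

lemma chain_end:
  assumes "run (Aut N) w m = q" "2 \<le> q" "q \<le> N+1"
  shows "run (Aut N) w (m + (N+2-q)) = 0"
proof -
  have "run (Aut N) w (m + (N+1-q)) = N+1" using chain[OF assms, of "N+1-q"] assms by simp
  moreover have "m + (N+2-q) = Suc (m + (N+1-q))" using assms by simp
  moreover have "0 < N" using assms by auto
  ultimately show ?thesis using tr_last[of N] by simp
qed

lemma Cor_le: "0 < N \<Longrightarrow> Cor (Aut N) w m \<le> enat N"
proof -
  assume N: "0 < N"
  let ?q = "run (Aut N) w m"
  show ?thesis
  proof (cases "even (colr N ?q)")
    case True then show ?thesis unfolding Cor_def by simp
  next
    case False
    then have q: "2 \<le> ?q" "?q \<le> N+1" "colr N ?q = 1" by (auto simp: colr_def split: if_splits)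
    let ?n = "m + (N+2-?q)"
    have "run (Aut N) w ?n = 0" using chain_end[OF refl q(1,2)] .
    then have "?n \<in> {n'. n' > m \<and> col (Aut N) (run (Aut N) w n') \<in> Ans (Aut N) (col (Aut N) ?q)}"
      using q N by (auto simp: Ans_Aut Ans_Aut' colr_def)
    then have "Cor (Aut N) w m \<le> enat (seg_cost (Aut N) w m ?n)"
      unfolding Cor_def using False by (auto intro: INF_lower)
    also have "\<dots> \<le> enat N" using q by (simp add: seg_cost_Aut)
    finally show ?thesis .
  qed
qed

lemma Cor_ge:
  assumes N: "0 < N" and r: "run (Aut N) w m = 2"
  shows "enat N \<le> Cor (Aut N) w m"
proof -
  have c: "colr N 2 = 1" using N by (simp add: colr_def)
  have "enat N \<le> enat (seg_cost (Aut N) w m n')"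
    if n': "n' > m" "colr N (run (Aut N) w n') \<in> Ans (Aut N) 1" for n'
  proof -
    have "colr N (run (Aut N) w n') = 2" using n' N by (simp add: Ans_Aut Ans_Aut')
    have "n' \<ge> m + N"
    proof (rule ccontr)
      assume "\<not> n' \<ge> m + N"
      then have "n' - m \<le> N+1-2" by simp
      from chain[OF r _ _ this] N have "run (Aut N) w (m + (n'-m)) = 2 + (n'-m)" by simp
      then have "colr N (run (Aut N) w n') = 1" using n' \<open>\<not> n' \<ge> m + N\<close> by (simp add: colr_def)
      with \<open>colr N (run (Aut N) w n') = 2\<close> show False by simp
    qed
    then show ?thesis by (simp add: seg_cost_Aut)
  qed
  then show ?thesis unfolding Cor_def using r c by (auto intro!: INF_greatest)
qed

lemma pref_len_fk: "pref_len (f_k k) j = k + 1 + j"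
  by (induction j) (auto simp: pref_len_def f_k_def)

lemma limsup_le: "(\<And>m. X m \<le> (c::enat)) \<Longrightarrow> limsup X \<le> c"
  by (rule Limsup_bounded) (simp add: always_eventually)

lemma limsup_ge: assumes "\<And>M. \<exists>m\<ge>M. (c::enat) \<le> X m" shows "c \<le> limsup X"
  unfolding limsup_INF_SUP
proof (rule INF_greatest)
  fix M :: nat
  obtain m where "m \<ge> M" "c \<le> X m" using assms by blast
  then show "c \<le> (SUP m\<in>{M..}. X m)" by (auto intro: SUP_upper2)
qed

lemma wf_Aut: "wf_pac (Aut N)"
proof -
  have "tr N q a \<in> {0..5*N+5}" if qa: "q \<in> {0..5*N+5}" "a \<in> {..<2*2^N+2} \<times> {..<2*N+2}" for q a
  proof -
    obtain x ob where a: "a = (x, ob)" "ob < 2*N+2" using qa(2) by auto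
    have ob: "ob div 2 \<le> N" using a(2) by simp
    have rsb: "rs N p (ob div 2) e \<le> 5*N+5" if "p \<le> 1" "e \<le> 1" for p e
      using that ob unfolding rs_def by simp
    have m1: "r mod 2 \<le> 1" "r div 2 mod 2 \<le> 1" for r :: nat by auto
    show ?thesis using qa a rsb[OF m1(1) bitn_le] rsb[OF m1(2) bitn_le]
      unfolding tr_def strt_def by (auto simp: Let_def)
  qed
  then show ?thesis unfolding wf_pac_def by auto
qed

lemma fin_Aut: "0 < N \<Longrightarrow> finitary_buechi (Aut N)"
proof -
  assume N: "0 < N"
  have "colr N ` {0..5*N+5} = {1,2}"
  proof
    show "colr N ` {0..5*N+5} \<subseteq> {1,2}" by (auto simp: colr_def)
    have "colr N 0 = 2" "colr N 2 = 1" "(0::nat) \<in> {0..5*N+5}" "(2::nat) \<in> {0..5*N+5}"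
      using N by (auto simp: colr_def)
    then show "{1,2} \<subseteq> colr N ` {0..5*N+5}" unfolding insert_subset
      using image_eqI[of 1 "colr N" 2 "{0..5*N+5}"] image_eqI[of 2 "colr N" 0 "{0..5*N+5}"] by simp
  qed
  then show ?thesis unfolding finitary_buechi_def using wf_Aut by simp
qed

lemma lang_Aut: assumes "0 < N" "\<And>i. w i \<in> alph (Aut N)"
  shows "w \<in> lang (Aut N)" "limsup (Cor (Aut N) w) \<le> enat N"
proof -
  show l: "limsup (Cor (Aut N) w) \<le> enat N" by (rule limsup_le) (rule Cor_le[OF assms(1)])
  then show "w \<in> lang (Aut N)" unfolding lang_def using assms(2)
    using le_less_trans[OF l, of \<infinity>] by auto
qed

lemma winning_Aut:
  assumes N: "0 < N" and st: "strategy {..<2*2^N+2} {..<2*N+2} \<tau>"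
  shows "winning {..<2*2^N+2} {..<2*N+2} f (lang (Aut N)) \<tau>"
    "strat_cost (Aut N) {..<2*2^N+2} f \<tau> \<le> enat N"
proof -
  have al: "\<And>i. outcome f \<tau> x i \<in> alph (Aut N)" if "\<forall>i. x i \<in> {..<2*2^N+2}" for x
  proof -
    fix i
    have "map x [0..<pref_len f i] \<in> lists {..<2*2^N+2}" using that by auto
    then show "outcome f \<tau> x i \<in> alph (Aut N)" using st that unfolding outcome_def strategy_def by auto
  qed
  show "winning {..<2*2^N+2} {..<2*N+2} f (lang (Aut N)) \<tau>"
    unfolding winning_def using st lang_Aut(1)[OF N al] by auto
  show "strat_cost (Aut N) {..<2*2^N+2} f \<tau> \<le> enat N"
    unfolding strat_cost_def using lang_Aut(2)[OF N al] by (auto intro!: SUP_least)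
qed

lemma bit_eq:
  "a < 2^(Suc n) \<Longrightarrow> b < 2^(Suc n) \<Longrightarrow> (\<forall>i\<le>n. bitn i a = bitn i b) \<Longrightarrow> a = b"
proof (induction n arbitrary: a b)
  case 0
  then have "a mod 2 = b mod 2" by (auto simp: bitn_def)
  with 0 show ?case by simp
next
  case (Suc n)
  have sh: "bitn i (c div 2) = bitn (Suc i) c" for i c
    unfolding bitn_def by (simp add: div_mult2_eq)
  have "a div 2 = b div 2"
    using Suc.IH[of "a div 2" "b div 2"] Suc.prems by (auto simp: sh)
  moreover have "a mod 2 = b mod 2" using Suc.prems(3) by (auto simp: bitn_def)
  ultimately show ?case by (metis div_mult_mod_eq)
qed

definition tI :: "nat \<Rightarrow> nat list \<Rightarrow> nat" where
  "tI N u = (let j = length u - (2^N + 1); cc = (\<lambda>t. u ! t div 2) in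
     (if \<exists>i\<le>N. bitn i (cc (Suc j)) \<noteq> bitn i (cc j - 1)
      then (LEAST i. bitn i (cc (Suc j)) \<noteq> bitn i (cc j - 1)) else 0))"
definition tP :: "nat \<Rightarrow> nat list \<Rightarrow> nat" where
  "tP N u = (let j = length u - (2^N + 1); cc = (\<lambda>t. u ! t div 2) in
     (if \<exists>t. j \<le> t \<and> t < length u \<and> cc t = 0 then u ! (LEAST t. j \<le> t \<and> cc t = 0) mod 2 else 0))"
definition tau2 :: "nat \<Rightarrow> nat list \<Rightarrow> nat" where
  "tau2 N u = 2 * tI N u + tP N u"

lemma Least_le_bound: "\<exists>i\<le>N. P i \<Longrightarrow> (LEAST i::nat. P i) \<le> N"
proof -
  assume "\<exists>i\<le>N. P i"
  then obtain i where "i \<le> N" "P i" by blast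
  then show ?thesis using Least_le[of P i] by linarith
qed

lemma tI_le: "tI N u \<le> N"
  unfolding tI_def Let_def using Least_le_bound by simp
lemma tP_le: "tP N u \<le> 1"
  unfolding tP_def Let_def by auto
lemma tau2_mod: "tau2 N u mod 2 = tP N u" using tP_le[of N u] unfolding tau2_def by auto
lemma tau2_div: "tau2 N u div 2 = tI N u" using tP_le[of N u] unfolding tau2_def by auto

lemma tau2_strat: "strategy SI {..<2*N+2} (tau2 N)"
proof -
  have "tau2 N u \<le> 2*N+1" for u using tI_le[of N u] tP_le[of N u] unfolding tau2_def by linarith
  then show ?thesis unfolding strategy_def by (simp add: less_Suc_eq_le)
qed

lemma div2_bound: "(y::nat) < 2*K + 2 \<Longrightarrow> y div 2 \<le> K" by presburger

lemma nth_mx: "t < n \<Longrightarrow> map x [0..<n] ! t = x t" by simp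
lemma len_mx: "length (map x [0..<n]) = n" by simp

lemma o1g:
  assumes lu: "length u = 2^N+1+j" and nth: "\<And>t. t < length u \<Longrightarrow> u ! t = x t"
    and "j \<le> m" "m \<le> j + 2^N" "x m div 2 = 0" "\<forall>t. j \<le> t \<and> t < m \<longrightarrow> x t div 2 \<noteq> 0"
  shows "tP N u = x m mod 2"
proof -
  have len: "length u - (2^N+1) = j" using lu by simp
  have mu: "m < length u" using lu assms(4) by simp
  have ex: "\<exists>t. j \<le> t \<and> t < length u \<and> u ! t div 2 = 0"
    using assms nth[OF mu] mu by (intro exI[of _ m]) auto
  have le: "(LEAST t. j \<le> t \<and> u ! t div 2 = 0) = m"
  proof (rule Least_equality)
    show "j \<le> m \<and> u ! m div 2 = 0" using assms nth[OF mu] by auto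
    fix y assume y: "j \<le> y \<and> u ! y div 2 = 0"
    show "m \<le> y"
    proof (rule ccontr)
      assume a: "\<not> m \<le> y"
      then have "u ! y = x y" using mu by (intro nth) auto
      with y assms a show False by auto
    qed
  qed
  have "tP N u = (if \<exists>t. j \<le> t \<and> t < length u \<and> u ! t div 2 = 0
      then u ! (LEAST t. j \<le> t \<and> u ! t div 2 = 0) mod 2 else 0)"
    unfolding tP_def Let_def len by (rule refl)
  also have "\<dots> = u ! m mod 2" unfolding if_P[OF ex] le by (rule refl)
  also have "\<dots> = x m mod 2" using nth[OF mu] by simp
  finally show ?thesis .
qed

lemma o1:
  assumes "j \<le> m" "m \<le> j + 2^N" "x m div 2 = 0" "\<forall>t. j \<le> t \<and> t < m \<longrightarrow> x t div 2 \<noteq> 0"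
  shows "tP N (map x [0..<2^N+1+j]) = x m mod 2"
  by (rule o1g[OF len_mx _ assms]) (simp only: len_mx nth_mx)

lemma o2g:
  assumes lu: "length u = 2^N+1+j" and nth: "\<And>t. t < length u \<Longrightarrow> u ! t = x t"
    and "\<forall>t. x t < 2*2^N+2"
    "bitn (tI N u) (x (Suc j) div 2) = bitn (tI N u) (x j div 2 - 1)"
  shows "x (Suc j) div 2 = x j div 2 - 1"
proof -
  have len: "length u - (2^N+1) = j" using lu by simp
  have "Suc j < length u" using lu by simp
  then have n1: "u ! j = x j" "u ! Suc j = x (Suc j)" using nth by auto
  let ?P = "\<lambda>i. bitn i (x (Suc j) div 2) \<noteq> bitn i (x j div 2 - 1)"
  have tI: "tI N u = (if \<exists>i\<le>N. ?P i then (LEAST i. ?P i) else 0)"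
    unfolding tI_def Let_def len n1 by (rule refl)
  show ?thesis
  proof (cases "\<exists>i\<le>N. ?P i")
    case True
    then obtain i0 where "?P i0" by blast
    then have "?P (LEAST i. ?P i)" by (rule LeastI)
    with True tI assms(4) show ?thesis by simp
  next
    case False
    have p: "(0::nat) < 2^N" by simp
    have b1: "x (Suc j) div 2 < 2^Suc N"
      using div2_bound[OF assms(3)[rule_format, of "Suc j"]] p unfolding power_Suc by linarith
    have b2: "x j div 2 - 1 < 2^Suc N"
      using div2_bound[OF assms(3)[rule_format, of j]] p unfolding power_Suc by linarith
    note b1 b2
    from bit_eq[OF this] False show ?thesis by auto
  qed
qed

lemma o2:
  assumes "\<forall>t. x t < 2*2^N+2"
    "bitn (tI N (map x [0..<2^N+1+j])) (x (Suc j) div 2) = bitn (tI N (map x [0..<2^N+1+j])) (x j div 2 - 1)"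
  shows "x (Suc j) div 2 = x j div 2 - 1"
  by (rule o2g[OF len_mx _ assms]) (simp only: len_mx nth_mx)

definition obs :: "nat \<Rightarrow> (nat \<Rightarrow> nat) \<Rightarrow> nat \<Rightarrow> nat" where
  "obs N x m = tau2 N (map x [0..<2^N+1+m])"

lemma outc2: "outcome (f_k (2^N)) (tau2 N) x m = (x m, obs N x m)"
  unfolding outcome_def obs_def pref_len_fk by simp

lemma tr0: "tr N 0 (a, ob) = strt N a ob" unfolding tr_def by simp
lemma tr1: "tr N (Suc 0) (a, ob) = Suc 0" unfolding tr_def by simp

lemma inv2:
  assumes xb: "\<forall>t. x t < 2*2^N+2"
  shows "run (Aut N) (outcome (f_k (2^N)) (tau2 N) x) m = 0 \<or> run (Aut N) (outcome (f_k (2^N)) (tau2 N) x) m = 1 \<or>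
    (\<exists>r. r < m \<and> run (Aut N) (outcome (f_k (2^N)) (tau2 N) x) m =
        rs N (obs N x r mod 2) (obs N x (m-1) div 2) (bitn (obs N x (m-1) div 2) (x (m-1) div 2 - 1)) \<and>
      (\<forall>t. r \<le> t \<and> t < m \<longrightarrow> 0 < x t div 2 \<and> x t div 2 + (t - r) = x r div 2))"
  (is "?I m")
proof (induction m)
  case 0 then show ?case by simp
next
  case (Suc m)
  let ?W = "outcome (f_k (2^N)) (tau2 N) x"
  have rS: "run (Aut N) ?W (Suc m) = tr N (run (Aut N) ?W m) (x m, obs N x m)"
    using outc2[of N x m] by simp
  have omod: "obs N x j mod 2 = tP N (map x [0..<2^N+1+j])" for j unfolding obs_def tau2_mod ..
  have odiv: "obs N x j div 2 = tI N (map x [0..<2^N+1+j])" for j unfolding obs_def tau2_div ..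
  consider (z) "run (Aut N) ?W m = 0" | (one) "run (Aut N) ?W m = 1" |
    (r) r where "r < m" "run (Aut N) ?W m =
        rs N (obs N x r mod 2) (obs N x (m-1) div 2) (bitn (obs N x (m-1) div 2) (x (m-1) div 2 - 1))"
      "\<forall>t. r \<le> t \<and> t < m \<longrightarrow> 0 < x t div 2 \<and> x t div 2 + (t - r) = x r div 2"
    using Suc.IH by (elim disjE exE conjE) auto
  then show ?case
  proof cases
    case z
    show ?thesis
    proof (cases "x m div 2 = 0")
      case True
      have "obs N x m mod 2 = x m mod 2" unfolding omod by (rule o1) (use True in auto)
      then show ?thesis using rS z True by (simp add: tr0 strt_def)
    next
      case False
      have "run (Aut N) ?W (Suc m) = rs N (obs N x m mod 2) (obs N x (Suc m - 1) div 2)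
          (bitn (obs N x (Suc m - 1) div 2) (x (Suc m - 1) div 2 - 1))"
        using rS z False by (simp add: tr0 strt_def)
      moreover have "\<forall>t. m \<le> t \<and> t < Suc m \<longrightarrow> 0 < x t div 2 \<and> x t div 2 + (t - m) = x m div 2"
      proof (intro allI impI)
        fix t assume "m \<le> t \<and> t < Suc m"
        then have "t = m" by simp
        then show "0 < x t div 2 \<and> x t div 2 + (t - m) = x m div 2" using False by simp
      qed
      ultimately show ?thesis by blast
    qed
  next
    case one then show ?thesis using rS by (simp add: tr1)
  next
    case r
    obtain m' where m': "m = Suc m'" using r(1) by (cases m) auto
    let ?p = "obs N x r mod 2" and ?i = "obs N x m' div 2"
    let ?e = "bitn ?i (x m' div 2 - 1)"
    have pe: "?p \<le> 1" "?e \<le> 1" by simp (rule bitn_le)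
    have rm: "run (Aut N) ?W m = rs N ?p ?i ?e" using r(2) m' by simp
    have st: "run (Aut N) ?W (Suc m) = (if bitn ?i (x m div 2) \<noteq> ?e then 1
       else if x m div 2 = 0 then (if x m mod 2 = ?p then 0 else 2)
       else rs N ?p (obs N x m div 2) (bitn (obs N x m div 2) (x m div 2 - 1)))"
      using rS rm tr_rs[OF pe] by simp
    show ?thesis
    proof (cases "bitn ?i (x m div 2) \<noteq> ?e")
      case True then show ?thesis using st by simp
    next
      case False
      have dec: "x m div 2 = x m' div 2 - 1"
        using o2[OF xb, of m'] False m' unfolding odiv by simp
      have im': "0 < x m' div 2" "x m' div 2 + (m' - r) = x r div 2"
        using r(3) r(1) m' by auto
      have acc: "x m div 2 + (m - r) = x r div 2" using dec im' m' r(1) by simp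
      show ?thesis
      proof (cases "x m div 2 = 0")
        case True
        have bnd: "x r div 2 \<le> 2^N" using div2_bound xb by blast
        have "obs N x r mod 2 = x m mod 2" unfolding omod
          by (rule o1) (use True acc bnd r(1) r(3) in auto)
        then show ?thesis using st False True by simp
      next
        case F2: False
        have "run (Aut N) ?W (Suc m) = rs N ?p (obs N x (Suc m - 1) div 2)
          (bitn (obs N x (Suc m - 1) div 2) (x (Suc m - 1) div 2 - 1))"
          using st False F2 by simp
        moreover have "\<forall>t. r \<le> t \<and> t < Suc m \<longrightarrow> 0 < x t div 2 \<and> x t div 2 + (t - r) = x r div 2"
          using r(3) F2 acc r(1) by (auto simp: less_Suc_eq)
        moreover have "r < Suc m" using r(1) by simp
        ultimately show ?thesis by blast
      qed
    qed
  qed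
qed

lemma cost2:
  assumes xb: "\<forall>t. x t < 2*2^N+2"
  shows "limsup (Cor (Aut N) (outcome (f_k (2^N)) (tau2 N) x)) = 0"
proof -
  have "Cor (Aut N) (outcome (f_k (2^N)) (tau2 N) x) m \<le> 0" for m
  proof -
    have rsb: "\<not> rs N (a mod 2) i (bitn i' c) \<le> Suc N" for a i i' c
    proof -
      have "a mod 2 \<le> (1::nat)" by simp
      from rs_dec(4)[OF this bitn_le, of N i i' c] show ?thesis by simp
    qed
    have "colr N (run (Aut N) (outcome (f_k (2^N)) (tau2 N) x) m) = 2"
      using inv2[OF xb, of m] by (elim disjE exE conjE) (simp_all add: colr_def rsb)
    then show ?thesis unfolding Cor_def by simp
  qed
  then have "limsup (Cor (Aut N) (outcome (f_k (2^N)) (tau2 N) x)) \<le> 0" by (rule limsup_le)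
  then show ?thesis by simp
qed

lemma scost2: "strat_cost (Aut N) {..<2*2^N+2} (f_k (2^N)) (tau2 N) = 0"
proof -
  have "(SUP x\<in>{x. \<forall>i. x i \<in> {..<2*2^N+2}}. limsup (Cor (Aut N) (outcome (f_k (2^N)) (tau2 N) x))) \<le> 0"
    by (rule SUP_least) (simp add: cost2)
  then show ?thesis unfolding strat_cost_def by simp
qed

definition lett :: "nat \<Rightarrow> nat \<Rightarrow> (nat list \<Rightarrow> nat) \<Rightarrow> nat \<Rightarrow> nat list \<Rightarrow> nat" where
  "lett N k \<tau> j u = 2 * (if j mod (2^N+N+1) \<le> 2^N then 2^N - j mod (2^N+N+1) else 0)
     + (if j mod (2^N+N+1) = 2^N then 1 - \<tau> (take (j - 2^N + k + 1) u) mod 2 else 0)"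

primrec pre :: "nat \<Rightarrow> nat \<Rightarrow> (nat list \<Rightarrow> nat) \<Rightarrow> nat \<Rightarrow> nat list" where
  "pre N k \<tau> 0 = []"
| "pre N k \<tau> (Suc j) = pre N k \<tau> j @ [lett N k \<tau> j (pre N k \<tau> j)]"

definition xadv :: "nat \<Rightarrow> nat \<Rightarrow> (nat list \<Rightarrow> nat) \<Rightarrow> nat \<Rightarrow> nat" where
  "xadv N k \<tau> j = lett N k \<tau> j (pre N k \<tau> j)"

lemma pre_eq: "pre N k \<tau> j = map (xadv N k \<tau>) [0..<j]"
  by (induction j) (simp_all add: xadv_def)

lemma xadv_rec: "xadv N k \<tau> j = lett N k \<tau> j (map (xadv N k \<tau>) [0..<j])"
  by (simp add: xadv_def pre_eq)

lemma lett_parts: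
  "lett N k \<tau> j u div 2 = (if j mod (2^N+N+1) \<le> 2^N then 2^N - j mod (2^N+N+1) else 0)"
  "lett N k \<tau> j u mod 2 = (if j mod (2^N+N+1) = 2^N then 1 - \<tau> (take (j - 2^N + k + 1) u) mod 2 else 0)"
  unfolding lett_def by auto

lemma xadv_bound: "xadv N k \<tau> j < 2*2^N+2"
proof -
  have "xadv N k \<tau> j div 2 \<le> 2^N" "xadv N k \<tau> j mod 2 \<le> 1"
    unfolding xadv_def lett_parts by auto
  then show ?thesis by linarith
qed

lemma xadv_mod:
  assumes "k < 2^N" "j mod (2^N+N+1) = 2^N"
  shows "xadv N k \<tau> j mod 2 = 1 - \<tau> (map (xadv N k \<tau>) [0..<k+1+(j-2^N)]) mod 2"
proof -
  have jb: "2^N \<le> j" using assms(2) by (metis mod_less_eq_dividend)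
  have eq: "j - 2^N + k + 1 = k+1+(j-2^N)" using jb by simp
  have le: "k+1+(j-2^N) \<le> j" using jb assms(1) by simp
  have "take (j - 2^N + k + 1) (map (xadv N k \<tau>) [0..<j]) = map (xadv N k \<tau>) [0..<k+1+(j-2^N)]"
    unfolding eq take_map using take_upt[of 0 "k+1+(j-2^N)" j] le by simp
  then show ?thesis using assms(2) xadv_rec[of N k \<tau> j] lett_parts(2) by metis
qed

lemma xadv_div: "xadv N k \<tau> j div 2 = (if j mod (2^N+N+1) \<le> 2^N then 2^N - j mod (2^N+N+1) else 0)"
  unfolding xadv_def lett_parts ..

lemma outck: "outcome (f_k k) \<tau> x m = (x m, \<tau> (map x [0..<k+1+m]))"
  unfolding outcome_def pref_len_fk by simp

lemma modL: "r mod (L::nat) = 0 \<Longrightarrow> s < L \<Longrightarrow> (r + s) mod L = s"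
proof -
  assume a: "r mod L = 0" "s < L"
  have "(r + s) mod L = (r mod L + s) mod L" by (simp add: mod_add_left_eq)
  then show ?thesis using a by simp
qed

lemma roundA:
  fixes \<tau> k N r
  defines "X \<equiv> xadv N k \<tau>"
  defines "W \<equiv> outcome (f_k k) \<tau> X"
  defines "oa \<equiv> \<lambda>j. \<tau> (map X [0..<k+1+j])"
  assumes r0: "r mod (2^N+N+1) = 0" and rr: "run (Aut N) W r = 0"
  shows "s < 2^N \<Longrightarrow> run (Aut N) W (r + Suc s) = rs N (oa r mod 2) (oa (r+s) div 2) (bitn (oa (r+s) div 2) (2^N - Suc s))"
proof (induction s)
  case 0
  have "X r div 2 = 2^N" using r0 unfolding X_def xadv_div by simp
  moreover have "W r = (X r, oa r)" unfolding W_def oa_def outck ..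
  moreover have "run (Aut N) W (r + Suc 0) = tr N (run (Aut N) W r) (W r)"
    unfolding add_Suc_right add_0_right by (rule runS)
  ultimately show ?case using rr by (simp add: tr0 strt_def)
next
  case (Suc s)
  let ?p = "oa r mod 2" and ?i = "oa (r+s) div 2"
  have pe: "?p \<le> 1" "bitn ?i (2^N - Suc s) \<le> 1" by simp (rule bitn_le)
  have m: "(r + Suc s) mod (2^N+N+1) = Suc s" using Suc.prems by (intro modL[OF r0]) simp
  have xd: "X (r + Suc s) div 2 = 2^N - Suc s" using m Suc.prems unfolding X_def xadv_div by simp
  have W: "W (r + Suc s) = (X (r+Suc s), oa (r+Suc s))" unfolding W_def oa_def outck ..
  have ih: "run (Aut N) W (r + Suc s) = rs N ?p ?i (bitn ?i (2^N - Suc s))" using Suc.IH Suc.prems by simp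
  have "run (Aut N) W (r + Suc (Suc s)) = tr N (run (Aut N) W (r + Suc s)) (W (r + Suc s))"
    unfolding add_Suc_right[of r "Suc s"] by (rule runS)
  also have "\<dots> = tr N (rs N ?p ?i (bitn ?i (2^N - Suc s))) (X (r+Suc s), oa (r+Suc s))"
    unfolding ih W ..
  also have "\<dots> = rs N ?p (oa (r + Suc s) div 2) (bitn (oa (r + Suc s) div 2) (2^N - Suc (Suc s)))"
  proof -
    have d: "2^N - Suc s - 1 = 2^N - Suc (Suc s)" by simp
    have nz: "(2::nat)^N - Suc s \<noteq> 0" using Suc.prems by simp
    show ?thesis unfolding tr_rs[OF pe] xd d using nz by simp
  qed
  finally show ?case .
qed

lemma roundB:
  fixes \<tau> k N r
  defines "X \<equiv> xadv N k \<tau>"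
  defines "W \<equiv> outcome (f_k k) \<tau> X"
  assumes k: "k < 2^N" and N: "0 < N"
    and r0: "r mod (2^N+N+1) = 0" and rr: "run (Aut N) W r = 0"
  shows "run (Aut N) W (r + Suc (2^N)) = 2" "run (Aut N) W (r + (2^N+N+1)) = 0"
proof -
  define oa where "oa \<equiv> \<lambda>j. \<tau> (map X [0..<k+1+j])"
  let ?p = "oa r mod 2" and ?i = "oa (r + (2^N - 1)) div 2"
  have pe: "?p \<le> 1" "bitn ?i 0 \<le> 1" by simp (rule bitn_le)
  have "run (Aut N) W (r + Suc (2^N - 1)) = rs N ?p ?i (bitn ?i (2^N - Suc (2^N - 1)))"
    using roundA[where \<tau>=\<tau> and k=k and N=N and r=r and s="2^N - 1", OF r0] rr unfolding X_def W_def oa_def by simp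
  then have a: "run (Aut N) W (r + 2^N) = rs N ?p ?i (bitn ?i 0)" by simp
  have m: "(r + 2^N) mod (2^N+N+1) = 2^N" by (intro modL[OF r0]) simp
  have xd: "X (r + 2^N) div 2 = 0" using m unfolding X_def xadv_div by simp
  have xm: "X (r + 2^N) mod 2 = 1 - ?p" using xadv_mod[OF k m, of \<tau>] unfolding X_def oa_def by simp
  have W: "W (r + 2^N) = (X (r+2^N), oa (r+2^N))" unfolding W_def oa_def outck ..
  have ne: "1 - ?p \<noteq> ?p" using pe(1) by (cases "?p = 0") auto
  have "run (Aut N) W (Suc (r + 2^N)) = tr N (rs N ?p ?i (bitn ?i 0)) (X (r+2^N), oa (r+2^N))"
    using a W by simp
  also have "\<dots> = 2" unfolding tr_rs[OF pe] xd xm using ne by simp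
  finally show e: "run (Aut N) W (r + Suc (2^N)) = 2" by simp
  have "run (Aut N) W (r + Suc (2^N) + (N+2-2)) = 0" by (rule chain_end[OF e]) (use N in auto)
  then show "run (Aut N) W (r + (2^N+N+1)) = 0" by (simp add: add.assoc)
qed

lemma rounds:
  fixes \<tau> k N
  defines "X \<equiv> xadv N k \<tau>"
  defines "W \<equiv> outcome (f_k k) \<tau> X"
  assumes k: "k < 2^N" and N: "0 < N"
  shows "run (Aut N) W (m * (2^N+N+1)) = 0 \<and> run (Aut N) W (m * (2^N+N+1) + Suc (2^N)) = 2"
proof (induction m)
  case 0
  have "(0::nat) mod (2^N+N+1) = 0" by simp
  from roundB[where \<tau>=\<tau> and r=0, OF k N this] show ?case unfolding X_def W_def by simp
next
  case (Suc m)
  let ?L = "2^N+N+1::nat"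
  have r0: "(m * ?L) mod ?L = 0" by (rule mod_mult_self2_is_0)
  have "run (Aut N) W (m * ?L + ?L) = 0"
    using roundB(2)[where \<tau>=\<tau> and r="m * ?L", OF k N r0] conjunct1[OF Suc.IH] unfolding X_def W_def by blast
  moreover have e: "Suc m * ?L = m * ?L + ?L" by simp
  ultimately have z: "run (Aut N) W (Suc m * ?L) = 0" by metis
  have r1: "(Suc m * ?L) mod ?L = 0" by (rule mod_mult_self2_is_0)
  have "run (Aut N) W (Suc m * ?L + Suc (2^N)) = 2"
    using roundB(1)[where \<tau>=\<tau> and r="Suc m * ?L", OF k N r1] z unfolding X_def W_def by blast
  with z show ?case by blast
qed

lemma adv_limsup:
  assumes k: "k < 2^N" and N: "0 < N"
  shows "enat N \<le> limsup (Cor (Aut N) (outcome (f_k k) \<tau> (xadv N k \<tau>)))"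
proof (rule limsup_ge)
  fix M
  let ?m = "M * (2^N+N+1) + Suc (2^N)"
  have "M * 1 \<le> M * (2^N+N+1)" by (rule mult_le_mono2) simp
  then have "M \<le> ?m" by linarith
  moreover have "enat N \<le> Cor (Aut N) (outcome (f_k k) \<tau> (xadv N k \<tau>)) ?m"
    by (rule Cor_ge[OF N conjunct2[OF rounds[where m=M and \<tau>=\<tau>, OF k N]]])
  ultimately show "\<exists>m\<ge>M. enat N \<le> Cor (Aut N) (outcome (f_k k) \<tau> (xadv N k \<tau>)) m" by (rule exI[where x="?m", OF conjI])
qed

lemma adv_cost:
  assumes k: "k < 2^N" and N: "0 < N"
  shows "enat N \<le> strat_cost (Aut N) {..<2*2^N+2} (f_k k) \<tau>"
  unfolding strat_cost_def
proof (rule SUP_upper2[of "xadv N k \<tau>"])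
  show "xadv N k \<tau> \<in> {x. \<forall>i. x i \<in> {..<2*2^N+2}}" using xadv_bound[of N k \<tau>] by blast
qed (rule adv_limsup[OF k N])

theorem theorem6:
  "\<exists>C::nat. \<forall>n::nat. n > 0 \<longrightarrow>
     (\<exists>(SI::nat set) (SO::nat set) (A::(nat, nat \<times> nat) pac).
        finite SI \<and> finite SO \<and> SI \<noteq> {} \<and> SO \<noteq> {} \<and>
        finitary_buechi A \<and> alph A = SI \<times> SO \<and> card (states A) \<le> C * n \<and>
        (\<forall>f. delay_fun f \<longrightarrow> O_wins SI SO f (lang A)) \<and>
        (\<exists>\<tau>. optimal A SI SO (f_k (2 ^ n)) \<tau> \<and> strat_cost A SI (f_k (2 ^ n)) \<tau> = 0) \<and>
        (\<forall>k < 2 ^ n. \<exists>\<tau>. optimal A SI SO (f_k k) \<tau> \<and> strat_cost A SI (f_k k) \<tau> = enat n))"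
proof (intro exI[of _ 11] allI impI)
  fix n :: nat assume N: "0 < n"
  let ?SI = "{..<2*2^n+2} :: nat set" and ?SO = "{..<2*n+2} :: nat set"
  let ?A = "Aut n"
  let ?t0 = "(\<lambda>_. 0) :: nat list \<Rightarrow> nat"
  have st0: "strategy ?SI ?SO ?t0" unfolding strategy_def by simp
  have card: "card (states ?A) \<le> 11 * n" using N by simp
  have wins: "\<forall>f. delay_fun f \<longrightarrow> O_wins ?SI ?SO f (lang ?A)"
    unfolding O_wins_def using winning_Aut(1)[OF N st0] by blast
  have opt2: "optimal ?A ?SI ?SO (f_k (2 ^ n)) (tau2 n) \<and> strat_cost ?A ?SI (f_k (2 ^ n)) (tau2 n) = 0"
    unfolding optimal_def using winning_Aut(1)[OF N tau2_strat] scost2 by simp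
  have optk: "\<forall>k < 2 ^ n. optimal ?A ?SI ?SO (f_k k) ?t0 \<and> strat_cost ?A ?SI (f_k k) ?t0 = enat n"
  proof (intro allI impI)
    fix k :: nat assume k: "k < 2^n"
    have c: "strat_cost ?A ?SI (f_k k) ?t0 = enat n"
      using winning_Aut(2)[OF N st0, of "f_k k"] adv_cost[OF k N, of ?t0] by (rule antisym)
    have "strat_cost ?A ?SI (f_k k) ?t0 \<le> strat_cost ?A ?SI (f_k k) \<tau>'" for \<tau>'
      unfolding c by (rule adv_cost[OF k N])
    then show "optimal ?A ?SI ?SO (f_k k) ?t0 \<and> strat_cost ?A ?SI (f_k k) ?t0 = enat n"
      unfolding optimal_def using winning_Aut(1)[OF N st0] c by blast
  qed
  show "\<exists>(SI::nat set) (SO::nat set) (A::(nat, nat \<times> nat) pac).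
        finite SI \<and> finite SO \<and> SI \<noteq> {} \<and> SO \<noteq> {} \<and>
        finitary_buechi A \<and> alph A = SI \<times> SO \<and> card (states A) \<le> 11 * n \<and>
        (\<forall>f. delay_fun f \<longrightarrow> O_wins SI SO f (lang A)) \<and>
        (\<exists>\<tau>. optimal A SI SO (f_k (2 ^ n)) \<tau> \<and> strat_cost A SI (f_k (2 ^ n)) \<tau> = 0) \<and>
        (\<forall>k < 2 ^ n. \<exists>\<tau>. optimal A SI SO (f_k k) \<tau> \<and> strat_cost A SI (f_k k) \<tau> = enat n)"
  proof -
    have f: "finite ?SI" "finite ?SO" "?SI \<noteq> {}" "?SO \<noteq> {}" "alph ?A = ?SI \<times> ?SO" by auto
    have o2: "\<exists>\<tau>. optimal ?A ?SI ?SO (f_k (2 ^ n)) \<tau> \<and> strat_cost ?A ?SI (f_k (2 ^ n)) \<tau> = 0"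
      using opt2 by blast
    have ok: "\<forall>k < 2 ^ n. \<exists>\<tau>. optimal ?A ?SI ?SO (f_k k) \<tau> \<and> strat_cost ?A ?SI (f_k k) \<tau> = enat n"
      using optk by blast
    show ?thesis using f fin_Aut[OF N] card wins o2 ok by blast
  qed
qed

end
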